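(* Let $\Gamma_0$ be a torsion discrete abelian group, realized as a subgroup of $\bigoplus_{p} \bigl(\bigoplus_{j \in J_p} \mathcal{C}(p^\infty)\bigr)$ (direct sum over primes $p$, each $J_p$ an index set), and for each prime $p$ write $\Gamma^{(p)} := \bigoplus_{j \in J_p} \mathcal{C}(p^\infty)$. Let $N = p_1^{n_1}\cdots p_k^{n_k}$ with distinct primes $p_i$ and $n_i \in \mathbb{N}$, and let $E \subset \Gamma_0$ be $N$-PR. Then there exist subsets $E_i \subset \Gamma^{(p_i)}$ that are $p_i^{n_i}$-PR, $1 \le i \le k$, and bijections $f_i: E_1 \to E_i$ for $2 \le i \le k$, such that $$E = \{\gamma \oplus f_2(\gamma) \oplus \cdots \oplus f_k(\gamma) \oplus \beta_\gamma : \gamma \in E_1\}$$ for some elements $\beta_\gamma \in \bigoplus_{p \notin \{p_1,\dots,p_k\}} \Gamma^{(p)}$.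
   Context: $\mathcal{C}(p^\infty)$ denotes the group of all $p^m$-th roots of unity, $m \ge 1$. For a discrete abelian group $\Delta$ with compact dual $\widehat{\Delta}$ and $M \in \mathbb{N}$, a subset $E \subset \Delta$ is $M$-PR if for every function $\varphi: E \to \mathbb{Z}_M$ (the $M$-th roots of unity in the unit circle) there exists $x \in \widehat{\Delta}$ with $\varphi(\gamma) = \gamma(x)$ for all $\gamma \in E$. *)

theory Defs
  imports Complex_Main "HOL-Computational_Algebra.Primes"
begin

definition prufer :: "nat \<Rightarrow> complex set" where
  "prufer p = {z. \<exists>m\<ge>1. z ^ (p ^ m) = 1}"

definition roots_of_unity :: "nat \<Rightarrow> complex set" where
  "roots_of_unity M = {z. z ^ M = 1}"

text \<open>Elements are finitely supported families g (p,j), multiplicative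
  notation, identity the constant function 1; coordinates not of the form
  (prime p, j in J p) are fixed to 1.\<close>
definition big_group :: "(nat \<Rightarrow> 'j set) \<Rightarrow> (nat \<times> 'j \<Rightarrow> complex) set" where
  "big_group J = {g. (\<forall>p j. (prime p \<and> j \<in> J p \<longrightarrow> g (p, j) \<in> prufer p) \<and>
                          (\<not> (prime p \<and> j \<in> J p) \<longrightarrow> g (p, j) = 1))
                    \<and> finite {i. g i \<noteq> 1}}"

definition gmult :: "(nat \<times> 'j \<Rightarrow> complex) \<Rightarrow> (nat \<times> 'j \<Rightarrow> complex) \<Rightarrow> (nat \<times> 'j \<Rightarrow> complex)" where
  "gmult g h = (\<lambda>i. g i * h i)"

definition ginv :: "(nat \<times> 'j \<Rightarrow> complex) \<Rightarrow> (nat \<times> 'j \<Rightarrow> complex)" where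
  "ginv g = (\<lambda>i. inverse (g i))"

text \<open>Gamma^(p), embedded as the elements supported on the p-block.\<close>
definition prime_component :: "(nat \<Rightarrow> 'j set) \<Rightarrow> nat \<Rightarrow> (nat \<times> 'j \<Rightarrow> complex) set" where
  "prime_component J p = {g \<in> big_group J. \<forall>q j. q \<noteq> p \<longrightarrow> g (q, j) = 1}"

definition components_outside :: "(nat \<Rightarrow> 'j set) \<Rightarrow> nat set \<Rightarrow> (nat \<times> 'j \<Rightarrow> complex) set" where
  "components_outside J P = {g \<in> big_group J. \<forall>q\<in>P. \<forall>j. g (q, j) = 1}"

definition is_subgroup :: "(nat \<Rightarrow> 'j set) \<Rightarrow> (nat \<times> 'j \<Rightarrow> complex) set \<Rightarrow> bool" where
  "is_subgroup J D \<longleftrightarrow> D \<subseteq> big_group J \<and> (\<lambda>_. 1) \<in> D \<and>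
     (\<forall>g\<in>D. \<forall>h\<in>D. gmult g h \<in> D) \<and> (\<forall>g\<in>D. ginv g \<in> D)"

text \<open>The dual group of the discrete group D: all homomorphisms D -> unit circle
  (every such homomorphism is continuous, D being discrete).\<close>
definition characters :: "(nat \<times> 'j \<Rightarrow> complex) set \<Rightarrow> ((nat \<times> 'j \<Rightarrow> complex) \<Rightarrow> complex) set" where
  "characters D = {\<chi>. (\<forall>g\<in>D. cmod (\<chi> g) = 1) \<and> (\<forall>g\<in>D. \<forall>h\<in>D. \<chi> (gmult g h) = \<chi> g * \<chi> h)}"

definition PR :: "nat \<Rightarrow> (nat \<times> 'j \<Rightarrow> complex) set \<Rightarrow> (nat \<times> 'j \<Rightarrow> complex) set \<Rightarrow> bool" where
  "PR M D E \<longleftrightarrow> E \<subseteq> D \<and>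
     (\<forall>\<phi>. (\<forall>\<gamma>\<in>E. \<phi> \<gamma> \<in> roots_of_unity M) \<longrightarrow> (\<exists>\<chi>\<in>characters D. \<forall>\<gamma>\<in>E. \<phi> \<gamma> = \<chi> \<gamma>))"

end

theory Submission
  imports Defs
begin


definition gpow :: "(nat \<times> 'j \<Rightarrow> complex) \<Rightarrow> nat \<Rightarrow> (nat \<times> 'j \<Rightarrow> complex)" where
  "gpow g a = (\<lambda>i. g i ^ a)"

definition gone :: "(nat \<times> 'j \<Rightarrow> complex)" where "gone = (\<lambda>_. 1)"

lemma prufer_nz: "z \<in> prufer p \<Longrightarrow> prime p \<Longrightarrow> z \<noteq> 0"
  unfolding prufer_def using prime_gt_0_nat[of p] by (auto simp: power_0_left)

lemma prufer_mult: "z \<in> prufer p \<Longrightarrow> w \<in> prufer p \<Longrightarrow> z * w \<in> prufer p"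
proof -
  assume "z \<in> prufer p" "w \<in> prufer p"
  then obtain a b where a: "a \<ge> 1" "z ^ (p^a) = 1" and b: "b \<ge> 1" "w ^ (p^b) = 1"
    unfolding prufer_def by auto
  have "(z*w) ^ (p^(a+b)) = (z ^ (p^a)) ^ (p^b) * (w ^ (p^b)) ^ (p^a)"
    by (simp add: power_mult_distrib power_add power_mult[symmetric] mult.commute)
  also have "\<dots> = 1" using a b by simp
  finally show ?thesis unfolding prufer_def using a by (intro CollectI exI[of _ "a+b"]) auto
qed

lemma prufer_one: "1 \<in> prufer p"
  unfolding prufer_def by auto

lemma big_nz: "g \<in> big_group J \<Longrightarrow> g x \<noteq> 0"
  unfolding big_group_def
  by (cases x) (metis (mono_tags, lifting) mem_Collect_eq prufer_nz zero_neq_one)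

lemma gone_big: "gone \<in> big_group J"
  unfolding big_group_def gone_def by (auto simp: prufer_one)

lemma gmult_big: "g \<in> big_group J \<Longrightarrow> h \<in> big_group J \<Longrightarrow> gmult g h \<in> big_group J"
proof -
  assume g: "g \<in> big_group J" and h: "h \<in> big_group J"
  have "{i. g i * h i \<noteq> 1} \<subseteq> {i. g i \<noteq> 1} \<union> {i. h i \<noteq> 1}" by auto
  then have "finite {i. g i * h i \<noteq> 1}"
    using g h unfolding big_group_def by (auto intro: finite_subset)
  then show ?thesis using g h unfolding big_group_def gmult_def
    by (auto simp: prufer_mult)
qed

lemma gpow_Suc: "gpow g (Suc n) = gmult g (gpow g n)"
  by (auto simp: gpow_def gmult_def)

lemma gpow_0: "gpow g 0 = gone"
  by (auto simp: gpow_def gone_def)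

lemma gpow_big: "g \<in> big_group J \<Longrightarrow> gpow g n \<in> big_group J"
  by (induction n) (auto simp: gpow_0 gpow_Suc gone_big gmult_big)

lemma tors_gen:
  fixes f :: "'a \<Rightarrow> complex"
  assumes "finite S" "\<forall>i\<in>S. \<exists>e>0. Q e \<and> f i ^ e = 1" "Q 1"
    "\<And>a b. Q a \<Longrightarrow> Q b \<Longrightarrow> Q (a*b)"
  shows "\<exists>e>0. Q e \<and> (\<forall>i\<in>S. f i ^ e = 1)"
  using assms(1,2)
proof (induction S rule: finite_induct)
  case empty
  then show ?case using assms(3) by (intro exI[of _ 1]) auto
next
  case (insert x F)
  then obtain e1 where e1: "e1 > 0" "Q e1" "f x ^ e1 = 1" by auto
  from insert obtain e2 where e2: "e2 > 0" "Q e2" "\<forall>i\<in>F. f i ^ e2 = 1" by auto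
  have "\<forall>i\<in>insert x F. f i ^ (e1*e2) = 1"
    using e1 e2 by (auto simp: power_mult) (metis power_mult mult.commute power_one)
  then show ?case using e1 e2 assms(4) by (intro exI[of _ "e1*e2"]) auto
qed

lemma tors_gen2:
  fixes f :: "'a \<Rightarrow> complex"
  assumes "finite {i. f i \<noteq> 1}" "\<forall>i. f i \<noteq> 1 \<longrightarrow> (\<exists>e>0. Q e \<and> f i ^ e = 1)" "Q 1"
    "\<And>a b. Q a \<Longrightarrow> Q b \<Longrightarrow> Q (a*b)"
  shows "\<exists>e>0. Q e \<and> (\<forall>i. f i ^ e = 1)"
proof -
  obtain e where "e > 0" "Q e" "\<forall>i\<in>{i. f i \<noteq> 1}. f i ^ e = 1"
    using tors_gen[OF assms(1) _ assms(3,4), of f] assms(2) by auto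
  then show ?thesis by (intro exI[of _ e]) (metis mem_Collect_eq power_one)
qed

lemma big_tors: "g \<in> big_group J \<Longrightarrow> \<exists>r>0. gpow g r = gone"
proof -
  assume g: "g \<in> big_group J"
  have "\<exists>e>0. True \<and> (\<forall>i. g i ^ e = 1)"
  proof (rule tors_gen2)
    show "finite {i. g i \<noteq> 1}" using g unfolding big_group_def by auto
    show "\<forall>i. g i \<noteq> 1 \<longrightarrow> (\<exists>e>0. True \<and> g i ^ e = 1)"
    proof (intro allI impI)
      fix i assume "g i \<noteq> 1"
      obtain q j where i: "i = (q,j)" by (cases i)
      then have "prime q" "g i \<in> prufer q" using g \<open>g i \<noteq> 1\<close> unfolding big_group_def by auto
      then obtain m where "g i ^ (q^m) = 1" unfolding prufer_def by auto
      then show "\<exists>e>0. True \<and> g i ^ e = 1"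
        using prime_gt_0_nat[OF \<open>prime q\<close>] by (intro exI[of _ "q^m"]) auto
    qed
  qed auto
  then show ?thesis by (auto simp: gpow_def gone_def fun_eq_iff)
qed



definition pgraph :: "(nat \<Rightarrow> 'j set) \<Rightarrow> ((nat \<times> 'j \<Rightarrow> complex) \<times> complex) set \<Rightarrow> bool" where
  "pgraph J R \<longleftrightarrow> fst ` R \<subseteq> big_group J \<and> (\<forall>x a b. (x,a)\<in>R \<longrightarrow> (x,b)\<in>R \<longrightarrow> a = b) \<and>
     (\<forall>x a y b. (x,a)\<in>R \<longrightarrow> (y,b)\<in>R \<longrightarrow> (gmult x y, a*b) \<in> R) \<and>
     (\<forall>x a. (x,a)\<in>R \<longrightarrow> cmod a = 1) \<and> (gone, 1) \<in> R"

lemma pg_fun: "pgraph J R \<Longrightarrow> (x,a)\<in>R \<Longrightarrow> (x,b)\<in>R \<Longrightarrow> a = b"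
  unfolding pgraph_def by blast
lemma pg_mult: "pgraph J R \<Longrightarrow> (x,a)\<in>R \<Longrightarrow> (y,b)\<in>R \<Longrightarrow> (gmult x y, a*b) \<in> R"
  unfolding pgraph_def by blast
lemma pg_big: "pgraph J R \<Longrightarrow> (x,a)\<in>R \<Longrightarrow> x \<in> big_group J"
  unfolding pgraph_def by force
lemma pg_one: "pgraph J R \<Longrightarrow> (gone,1)\<in>R"
  unfolding pgraph_def by blast
lemma pg_cmod: "pgraph J R \<Longrightarrow> (x,a)\<in>R \<Longrightarrow> cmod a = 1"
  unfolding pgraph_def by blast

lemma pg_pow: "pgraph J R \<Longrightarrow> (x,a)\<in>R \<Longrightarrow> (gpow x n, a^n) \<in> R"
  by (induction n) (auto simp: gpow_0 gpow_Suc pg_one pg_mult)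

lemma pg_inv:
  assumes "pgraph J R" "(x,a)\<in>R"
  shows "\<exists>x' a'. (x',a')\<in>R \<and> gmult x x' = gone \<and> a * a' = 1"
proof -
  obtain r where r: "r > 0" "gpow x r = gone" using big_tors pg_big[OF assms] by blast
  have "(gpow x r, a^r) \<in> R" using pg_pow[OF assms] .
  then have "a^r = 1" using r pg_one[OF assms(1)] pg_fun[OF assms(1)] by auto
  moreover have "gmult x (gpow x (r-1)) = gone" using r gpow_Suc[of x "r-1"] by simp
  ultimately show ?thesis using pg_pow[OF assms, of "r-1"] r
    by (intro exI[of _ "gpow x (r-1)"] exI[of _ "a^(r-1)"]) (auto simp: power_Suc[symmetric])
qed

lemma pg_extend:
  assumes R: "pgraph J R" and g: "g \<in> big_group J" "g \<notin> fst ` R"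
  shows "\<exists>R'. pgraph J R' \<and> R \<subseteq> R' \<and> g \<in> fst ` R'"
proof -
  define T where "T = {m. m > 0 \<and> gpow g m \<in> fst ` R}"
  obtain r where r: "r > 0" "gpow g r = gone" using big_tors g by blast
  then have "r \<in> T" using pg_one[OF R] unfolding T_def by force
  define m where "m = (LEAST m. m \<in> T)"
  have mT: "m \<in> T" using \<open>r \<in> T\<close> unfolding m_def by (rule LeastI)
  have mmin: "\<And>s. s \<in> T \<Longrightarrow> m \<le> s" unfolding m_def by (rule Least_le)
  obtain c0 where c0: "(gpow g m, c0) \<in> R" using mT unfolding T_def by auto
  have m0: "m > 0" using mT unfolding T_def by auto
  define w where "w = cis (Arg c0 / real m)"
  have c0n: "cmod c0 = 1" using pg_cmod[OF R c0] .
  then have c0nz: "c0 \<noteq> 0" by auto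
  have wm: "w ^ m = c0" unfolding w_def DeMoivre using m0 c0n cis_Arg[OF c0nz]
    by (simp add: sgn_div_norm)
  have wn: "cmod w = 1" unfolding w_def by simp
  have claim: "\<And>v. (gpow g s, v) \<in> R \<Longrightarrow> v = w ^ s" for s
  proof (induction s rule: less_induct)
    case (less s)
    show ?case
    proof (cases "s = 0")
      case True
      then show ?thesis using less.prems pg_one[OF R] pg_fun[OF R] by (auto simp: gpow_0)
    next
      case False
      then have "s \<in> T" using less.prems unfolding T_def by force
      then have "m \<le> s" by (rule mmin)
      obtain x' a' where xa: "(x',a')\<in>R" "gmult (gpow g m) x' = gone" "c0 * a' = 1"
        using pg_inv[OF R c0] by blast
      have "gmult x' (gpow g s) = gpow g (s-m)"
      proof
        fix i
        have "gpow g m i * x' i = 1" using xa(2) unfolding gmult_def gone_def by metis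
        moreover have "g i ^ s = g i ^ m * g i ^ (s-m)" using \<open>m \<le> s\<close>
          by (simp add: power_add[symmetric])
        ultimately show "gmult x' (gpow g s) i = gpow g (s - m) i"
          unfolding gmult_def gpow_def by (metis mult.assoc mult.commute mult_1)
      qed
      then have "(gpow g (s-m), a' * v) \<in> R" using pg_mult[OF R xa(1) less.prems] by simp
      then have "a' * v = w ^ (s-m)" using less.IH[of "s-m"] m0 False by auto
      then have "c0 * (a' * v) = w^m * w^(s-m)" using wm by simp
      then show "v = w ^ s" using xa(3) \<open>m \<le> s\<close>
        by (simp add: power_add[symmetric] mult.assoc[symmetric])
    qed
  qed
  define R' where "R' = {(gmult d (gpow g a), c * w^a) | d c a. (d,c) \<in> R}"
  have sub: "R \<subseteq> R'"
  proof
    fix z assume "z \<in> R"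
    then obtain d c where "z = (d,c)" "(d,c)\<in>R" by (cases z) auto
    moreover have "gmult d (gpow g 0) = d" by (auto simp: gpow_0 gmult_def gone_def)
    ultimately show "z \<in> R'" unfolding R'_def by (intro CollectI exI[of _ d] exI[of _ c] exI[of _ 0]) auto
  qed
  have gin: "(g, w) \<in> R'"
  proof -
    have "gmult gone (gpow g 1) = g" by (auto simp: gpow_def gmult_def gone_def)
    then show ?thesis unfolding R'_def using pg_one[OF R]
      by (intro CollectI exI[of _ gone] exI[of _ 1] exI[of _ 1]) auto
  qed
  have fun1: "c * w^a = c' * w^b"
    if hh: "(d,c)\<in>R" "(d',c')\<in>R" "gmult d (gpow g a) = gmult d' (gpow g b)" "b \<le> a" for d c a d' c' b
  proof -
    obtain x' a' where xa: "(x',a')\<in>R" "gmult d x' = gone" "c * a' = 1"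
      using pg_inv[OF R hh(1)] by blast
    have "gmult x' d' = gpow g (a-b)"
    proof
      fix i
      have gnz: "g i \<noteq> 0" using big_nz g(1) by blast
      have 1: "d i * x' i = 1" using xa(2) unfolding gmult_def gone_def by metis
      have 2: "d i * g i ^ a = d' i * g i ^ b" using hh(3) unfolding gmult_def gpow_def by metis
      have "g i ^ a = g i ^ (a-b) * g i ^ b" using \<open>b \<le> a\<close> by (simp add: power_add[symmetric])
      then have "d' i = d i * g i ^ (a-b)" using 2 gnz by (simp add: mult.assoc)
      then show "gmult x' d' i = gpow g (a - b) i" unfolding gmult_def gpow_def
        using 1 by (metis mult.assoc mult.commute mult_1)
    qed
    then have "(gpow g (a-b), a' * c') \<in> R" using pg_mult[OF R xa(1) hh(2)] by simp
    then have "a' * c' = w^(a-b)" using claim by blast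
    then have "c * w^a = c * (a' * c') * w^b" using \<open>b \<le> a\<close> by (simp add: power_add[symmetric])
    also have "\<dots> = c' * w^b" using xa(3) by (simp add: mult.assoc[symmetric])
    finally show ?thesis .
  qed
  have "pgraph J R'"
    unfolding pgraph_def
  proof (intro conjI allI impI)
    show "fst ` R' \<subseteq> big_group J" unfolding R'_def
      using pg_big[OF R] g(1) by (auto intro!: gmult_big gpow_big)
  next
    fix x a b assume "(x,a)\<in>R'" "(x,b)\<in>R'"
    then obtain d c e d' c' e' where 1: "(d,c)\<in>R" "x = gmult d (gpow g e)" "a = c * w^e"
      and 2: "(d',c')\<in>R" "x = gmult d' (gpow g e')" "b = c' * w^e'"
      unfolding R'_def by blast
    show "a = b"
    proof (cases "e' \<le> e")
      case True then show ?thesis using fun1[OF 1(1) 2(1)] 1 2 by auto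
    next
      case False then show ?thesis using fun1[OF 2(1) 1(1)] 1 2 by auto
    qed
  next
    fix x a y b assume "(x,a)\<in>R'" "(y,b)\<in>R'"
    then obtain d c e d' c' e' where 1: "(d,c)\<in>R" "x = gmult d (gpow g e)" "a = c * w^e"
      and 2: "(d',c')\<in>R" "y = gmult d' (gpow g e')" "b = c' * w^e'"
      unfolding R'_def by blast
    have "gmult x y = gmult (gmult d d') (gpow g (e+e'))"
      using 1 2 by (auto simp: gmult_def gpow_def power_add mult_ac)
    moreover have "a * b = (c*c') * w^(e+e')" using 1 2 by (simp add: power_add mult_ac)
    ultimately show "(gmult x y, a*b) \<in> R'" unfolding R'_def
      using pg_mult[OF R 1(1) 2(1)] by blast
  next
    fix x a assume "(x,a)\<in>R'"
    then obtain d c e where 1: "(d,c)\<in>R" "a = c * w^e" unfolding R'_def by blast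
    then show "cmod a = 1" using pg_cmod[OF R 1(1)] wn by (simp add: norm_mult norm_power)
  next
    show "(gone, 1) \<in> R'" using sub pg_one[OF R] by blast
  qed
  then show ?thesis using sub gin by force
qed

lemma char_extend:
  assumes H: "H \<subseteq> big_group J" "gone \<in> H" "\<forall>g\<in>H. \<forall>h\<in>H. gmult g h \<in> H"
    and chi: "\<chi> \<in> characters H"
  shows "\<exists>\<chi>'\<in>characters (big_group J). \<forall>h\<in>H. \<chi>' h = \<chi> h"
proof -
  have c1: "\<chi> gone = 1"
  proof -
    have "gmult gone gone = gone" by (auto simp: gmult_def gone_def)
    moreover have "\<chi> (gmult gone gone) = \<chi> gone * \<chi> gone" using chi H(2) unfolding characters_def by blast
    ultimately have "\<chi> gone = \<chi> gone * \<chi> gone" by (metis (no_types))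
    moreover have "\<chi> gone \<noteq> 0" using chi H(2) unfolding characters_def by auto
    ultimately show ?thesis by simp
  qed
  define A where "A = {R. pgraph J R \<and> (\<forall>h\<in>H. (h, \<chi> h) \<in> R)}"
  define R0 where "R0 = (\<lambda>h. (h, \<chi> h)) ` H"
  have R0A: "R0 \<in> A" unfolding A_def
  proof (intro CollectI conjI ballI)
    show "pgraph J R0" unfolding pgraph_def
    proof (intro conjI allI impI)
      show "fst ` R0 \<subseteq> big_group J" using H(1) unfolding R0_def by auto
      show "(gone, 1) \<in> R0" using H(2) c1 unfolding R0_def by force
    next
      fix x a b assume "(x, a) \<in> R0" "(x, b) \<in> R0" then show "a = b" unfolding R0_def by auto
    next
      fix x a y b assume xa: "(x, a) \<in> R0" and yb: "(y, b) \<in> R0"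
      then have "x \<in> H" "y \<in> H" "a = \<chi> x" "b = \<chi> y" unfolding R0_def by auto
      moreover have "\<chi> (gmult x y) = \<chi> x * \<chi> y" using chi calculation(1,2)
        unfolding characters_def by blast
      ultimately show "(gmult x y, a * b) \<in> R0" unfolding R0_def using H(3) by force
    next
      fix x a assume "(x, a) \<in> R0" then show "cmod a = 1" using chi unfolding R0_def characters_def by auto
    qed
  next
    fix h assume "h \<in> H" then show "(h, \<chi> h) \<in> R0" unfolding R0_def by auto
  qed
  have "\<exists>M\<in>A. \<forall>X\<in>A. M \<subseteq> X \<longrightarrow> X = M"
  proof (rule Zorn_Lemma2, intro ballI)
    fix C assume C: "C \<in> chains A"
    show "\<exists>U\<in>A. \<forall>X\<in>C. X \<subseteq> U"
    proof (cases "C = {}")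
      case True then show ?thesis using R0A by auto
    next
      case False
      have CA: "C \<subseteq> A" and ch: "\<forall>X\<in>C. \<forall>Y\<in>C. X \<subseteq> Y \<or> Y \<subseteq> X"
        using C unfolding chains_def chain_subset_def by auto
      have "\<Union>C \<in> A"
        unfolding A_def pgraph_def
      proof (intro CollectI conjI allI impI ballI)
        show "fst ` \<Union>C \<subseteq> big_group J" using CA unfolding A_def by (force intro: pg_big)
      next
        fix x a b assume "(x,a) \<in> \<Union>C" "(x,b) \<in> \<Union>C"
        then obtain X Y where "X \<in> C" "Y \<in> C" "(x,a)\<in>X" "(x,b)\<in>Y" by auto
        then obtain Z where Z: "Z \<in> C" "(x,a)\<in>Z" "(x,b)\<in>Z" using ch by blast
        then have "pgraph J Z" using CA unfolding A_def by blast
        then show "a = b" using Z pg_fun by blast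
      next
        fix x a y b assume "(x,a) \<in> \<Union>C" "(y,b) \<in> \<Union>C"
        then obtain X Y where "X \<in> C" "Y \<in> C" "(x,a)\<in>X" "(y,b)\<in>Y" by auto
        then obtain Z where Z: "Z \<in> C" "(x,a)\<in>Z" "(y,b)\<in>Z" using ch by blast
        then have "pgraph J Z" using CA unfolding A_def by blast
        then show "(gmult x y, a*b) \<in> \<Union>C" using Z pg_mult by blast
      next
        fix x a assume "(x,a) \<in> \<Union>C"
        then show "cmod a = 1" using CA unfolding A_def by (auto dest: pg_cmod)
      next
        show "(gone, 1) \<in> \<Union>C" using CA False unfolding A_def by (auto dest: pg_one)
      next
        fix h assume "h \<in> H"
        then show "(h, \<chi> h) \<in> \<Union>C" using CA False unfolding A_def by auto
      qed
      then show ?thesis by auto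
    qed
  qed
  then obtain M where MA: "M \<in> A" and Mmax: "\<forall>X\<in>A. M \<subseteq> X \<longrightarrow> X = M" by blast
  have M: "pgraph J M" using MA unfolding A_def by auto
  have tot: "\<forall>x\<in>big_group J. \<exists>a. (x,a)\<in>M"
  proof (rule ccontr)
    assume "\<not> ?thesis"
    then obtain g where g: "g \<in> big_group J" "g \<notin> fst ` M" by force
    obtain R' where R': "pgraph J R'" "M \<subseteq> R'" "g \<in> fst ` R'" using pg_extend[OF M g] by blast
    then have "R' \<in> A" using MA unfolding A_def by auto
    then have "R' = M" using Mmax R'(2) by auto
    then show False using g R' by auto
  qed
  define \<chi>' where "\<chi>' x = (SOME a. (x,a)\<in>M)" for x
  have chM: "x \<in> big_group J \<Longrightarrow> (x, \<chi>' x) \<in> M" for x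
    unfolding \<chi>'_def using tot by (metis someI_ex)
  have "\<chi>' \<in> characters (big_group J)" unfolding characters_def
  proof (intro CollectI conjI ballI)
    fix g assume "g \<in> big_group J" then show "cmod (\<chi>' g) = 1" using chM pg_cmod[OF M] by blast
  next
    fix g h assume "g \<in> big_group J" "h \<in> big_group J"
    then have "(gmult g h, \<chi>' g * \<chi>' h) \<in> M" using chM pg_mult[OF M] by blast
    moreover have "(gmult g h, \<chi>' (gmult g h)) \<in> M" using chM gmult_big \<open>g \<in> big_group J\<close> \<open>h \<in> big_group J\<close> by blast
    ultimately show "\<chi>' (gmult g h) = \<chi>' g * \<chi>' h" using pg_fun[OF M] by blast
  qed
  moreover have "\<forall>h\<in>H. \<chi>' h = \<chi> h"
  proof
    fix h assume "h \<in> H"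
    then have "(h, \<chi> h) \<in> M" using MA unfolding A_def by blast
    moreover have "(h, \<chi>' h) \<in> M" using chM H(1) \<open>h \<in> H\<close> by blast
    ultimately show "\<chi>' h = \<chi> h" using pg_fun[OF M] by blast
  qed
  ultimately show ?thesis by blast
qed



definition comp :: "nat \<Rightarrow> (nat \<times> 'j \<Rightarrow> complex) \<Rightarrow> (nat \<times> 'j \<Rightarrow> complex)" where
  "comp p g = (\<lambda>x. if fst x = p then g x else 1)"

definition rest :: "nat set \<Rightarrow> (nat \<times> 'j \<Rightarrow> complex) \<Rightarrow> (nat \<times> 'j \<Rightarrow> complex)" where
  "rest P g = (\<lambda>x. if fst x \<in> P then 1 else g x)"

lemma comp_big: "g \<in> big_group J \<Longrightarrow> comp p g \<in> big_group J"
proof -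
  assume g: "g \<in> big_group J"
  have "{i. comp p g i \<noteq> 1} \<subseteq> {i. g i \<noteq> 1}" unfolding comp_def by auto
  then have "finite {i. comp p g i \<noteq> 1}" using g unfolding big_group_def by (auto intro: finite_subset)
  then show ?thesis using g unfolding big_group_def comp_def by (auto simp: prufer_one)
qed

lemma rest_big: "g \<in> big_group J \<Longrightarrow> rest P g \<in> big_group J"
proof -
  assume g: "g \<in> big_group J"
  have "{i. rest P g i \<noteq> 1} \<subseteq> {i. g i \<noteq> 1}" unfolding rest_def by auto
  then have "finite {i. rest P g i \<noteq> 1}" using g unfolding big_group_def by (auto intro: finite_subset)
  then show ?thesis using g unfolding big_group_def rest_def by (auto simp: prufer_one)
qed

lemma comp_pc: "g \<in> big_group J \<Longrightarrow> comp p g \<in> prime_component J p"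
  unfolding prime_component_def using comp_big by (auto simp: comp_def)

lemma rest_co: "g \<in> big_group J \<Longrightarrow> rest P g \<in> components_outside J P"
  unfolding components_outside_def using rest_big by (auto simp: rest_def)

lemma split_comp: "gmult (comp p g) (rest {p} g) = g"
  by (auto simp: gmult_def comp_def rest_def)

lemma chi_one: "\<chi> \<in> characters (big_group J) \<Longrightarrow> \<chi> gone = 1"
proof -
  assume chi: "\<chi> \<in> characters (big_group J)"
  have "gmult gone gone = gone" by (auto simp: gmult_def gone_def)
  moreover have "\<chi> (gmult gone gone) = \<chi> gone * \<chi> gone" using chi gone_big unfolding characters_def by blast
  ultimately have "\<chi> gone = \<chi> gone * \<chi> gone" by (metis (no_types))
  moreover have "\<chi> gone \<noteq> 0" using chi gone_big unfolding characters_def by force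
  ultimately show ?thesis by simp
qed

lemma chi_pow: "\<chi> \<in> characters (big_group J) \<Longrightarrow> g \<in> big_group J \<Longrightarrow> \<chi> (gpow g n) = \<chi> g ^ n"
proof (induction n)
  case 0 then show ?case by (simp add: gpow_0 chi_one)
next
  case (Suc n)
  have "\<chi> (gmult g (gpow g n)) = \<chi> g * \<chi> (gpow g n)"
    using Suc.prems gpow_big unfolding characters_def by blast
  then show ?case using Suc by (simp add: gpow_Suc)
qed

lemma chi_tors: "\<chi> \<in> characters (big_group J) \<Longrightarrow> g \<in> big_group J \<Longrightarrow> gpow g n = gone \<Longrightarrow> \<chi> g ^ n = 1"
proof -
  assume a: "\<chi> \<in> characters (big_group J)" "g \<in> big_group J" "gpow g n = gone"
  have "\<chi> g ^ n = \<chi> (gpow g n)" using chi_pow[OF a(1,2)] by simp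
  then show ?thesis using a(3) chi_one[OF a(1)] by simp
qed

lemma comp_tors:
  assumes g: "g \<in> big_group J" and p: "prime p"
  shows "\<exists>e. gpow (comp p g) (p^e) = gone"
proof -
  have "\<exists>e>0. (\<exists>m. e = p^m) \<and> (\<forall>i. comp p g i ^ e = 1)"
  proof (rule tors_gen2)
    have "{i. comp p g i \<noteq> 1} \<subseteq> {i. g i \<noteq> 1}" unfolding comp_def by auto
    then show "finite {i. comp p g i \<noteq> 1}" using g unfolding big_group_def by (auto intro: finite_subset)
    show "\<forall>i. comp p g i \<noteq> 1 \<longrightarrow> (\<exists>e>0. (\<exists>m. e = p ^ m) \<and> comp p g i ^ e = 1)"
    proof (intro allI impI)
      fix i assume ne: "comp p g i \<noteq> 1"
      obtain q j where i: "i = (q,j)" by (cases i)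
      then have "q = p" "g i \<noteq> 1" using ne unfolding comp_def by (auto split: if_splits)
      then have "g i \<in> prufer p" using g i unfolding big_group_def by auto
      then obtain m where "g i ^ (p^m) = 1" unfolding prufer_def by auto
      then show "\<exists>e>0. (\<exists>m. e = p ^ m) \<and> comp p g i ^ e = 1"
        using prime_gt_0_nat[OF p] \<open>q = p\<close> i by (intro exI[of _ "p^m"]) (auto simp: comp_def)
    qed
    show "\<exists>m. 1 = p^m" by (intro exI[of _ 0]) auto
    show "\<And>a b. \<exists>m. a = p ^ m \<Longrightarrow> \<exists>m. b = p ^ m \<Longrightarrow> \<exists>m. a * b = p ^ m"
      by (metis power_add)
  qed
  then show ?thesis by (auto simp: gpow_def gone_def fun_eq_iff)
qed

lemma rest_tors:
  assumes g: "g \<in> big_group J" and p: "prime p"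
  shows "\<exists>M. coprime M p \<and> gpow (rest {p} g) M = gone"
proof -
  have "\<exists>e>0. coprime e p \<and> (\<forall>i. rest {p} g i ^ e = 1)"
  proof (rule tors_gen2)
    have "{i. rest {p} g i \<noteq> 1} \<subseteq> {i. g i \<noteq> 1}" unfolding rest_def by auto
    then show "finite {i. rest {p} g i \<noteq> 1}" using g unfolding big_group_def by (auto intro: finite_subset)
    show "\<forall>i. rest {p} g i \<noteq> 1 \<longrightarrow> (\<exists>e>0. coprime e p \<and> rest {p} g i ^ e = 1)"
    proof (intro allI impI)
      fix i assume ne: "rest {p} g i \<noteq> 1"
      obtain q j where i: "i = (q,j)" by (cases i)
      then have "q \<noteq> p" "g i \<noteq> 1" using ne unfolding rest_def by (auto split: if_splits)
      then have "g i \<in> prufer q" "prime q" using g i unfolding big_group_def by auto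
      then obtain m where "g i ^ (q^m) = 1" unfolding prufer_def by auto
      moreover have "coprime (q^m) p" using \<open>prime q\<close> p \<open>q \<noteq> p\<close>
        by (simp add: primes_coprime coprime_power_left_iff)
      ultimately show "\<exists>e>0. coprime e p \<and> rest {p} g i ^ e = 1"
        using prime_gt_0_nat[OF \<open>prime q\<close>] \<open>q \<noteq> p\<close> i by (intro exI[of _ "q^m"]) (auto simp: rest_def)
    qed
  qed auto
  then show ?thesis by (auto simp: gpow_def gone_def fun_eq_iff)
qed

lemma root_coprime:
  fixes z :: complex
  assumes "z ^ a = 1" "z ^ b = 1" "coprime a b"
  shows "z = 1"
proof (cases "a = 0")
  case True
  then have "b = 1" using assms(3) by simp
  then show ?thesis using assms(2) by simp
next
  case False
  obtain x y where xy: "a * x = b * y + gcd a b" using bezout_nat[OF False] by blast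
  then have "a * x = b * y + 1" using assms(3) by simp
  then have "z ^ (a*x) = z ^ (b*y) * z" by (simp add: power_add)
  then show ?thesis using assms(1,2) by (simp add: power_mult)
qed

lemma dec:
  assumes chi: "\<chi> \<in> characters (big_group J)" and g: "g \<in> big_group J" and p: "prime p"
  shows "\<exists>e M u. \<chi> g = \<chi> (comp p g) * u \<and> \<chi> (comp p g) ^ (p^e) = 1 \<and> u ^ M = 1 \<and> coprime M p
           \<and> cmod (\<chi> (comp p g)) = 1"
proof -
  obtain e where e: "gpow (comp p g) (p^e) = gone" using comp_tors[OF g p] by blast
  obtain M where M: "coprime M p" "gpow (rest {p} g) M = gone" using rest_tors[OF g p] by blast
  have "\<chi> (gmult (comp p g) (rest {p} g)) = \<chi> (comp p g) * \<chi> (rest {p} g)"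
    using chi comp_big[OF g] rest_big[OF g] unfolding characters_def by blast
  then have "\<chi> g = \<chi> (comp p g) * \<chi> (rest {p} g)" by (simp only: split_comp)
  moreover have "\<chi> (comp p g) ^ (p^e) = 1" using chi_tors[OF chi comp_big[OF g] e] .
  moreover have "\<chi> (rest {p} g) ^ M = 1" using chi_tors[OF chi rest_big[OF g] M(2)] .
  moreover have "cmod (\<chi> (comp p g)) = 1" using chi comp_big[OF g] unfolding characters_def by blast
  ultimately show ?thesis using M(1) by blast
qed



lemma recomb:
  fixes p :: "nat \<Rightarrow> nat" and k :: nat and g :: "nat \<times> 'j \<Rightarrow> complex"
  assumes inj: "inj_on p {1..k}" and k: "k \<ge> 1"
  shows "comp (p 1) g x * (\<Prod>i\<in>{2..k}. comp (p i) g x) * rest (p ` {1..k}) g x = g x"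
proof -
  have ne: "p i \<noteq> p 1" if "i \<in> {2..k}" for i
    using inj_onD[OF inj, of i 1] that k by auto
  have U: "{1..k} = insert 1 {2..k}" using k by auto
  show ?thesis
  proof (cases "fst x = p 1")
    case True
    have "(\<Prod>i\<in>{2..k}. comp (p i) g x) = 1"
    proof (intro prod.neutral ballI)
      fix i assume "i \<in> {2..k}"
      then have "p i \<noteq> fst x" using ne True by simp
      then show "comp (p i) g x = 1" by (simp add: comp_def)
    qed
    moreover have "fst x \<in> p ` {1..k}" using True k by auto
    ultimately show ?thesis using True by (simp add: comp_def rest_def)
  next
    case F1: False
    show ?thesis
    proof (cases "fst x \<in> p ` {2..k}")
      case True
      then obtain i0 where i0: "i0 \<in> {2..k}" "fst x = p i0" by auto
      have eq: "comp (p i) g x = (if i = i0 then g x else 1)" if i: "i \<in> {2..k}" for i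
      proof (cases "i = i0")
        case True then show ?thesis using i0(2) by (simp add: comp_def)
      next
        case False
        have "p i \<noteq> p i0"
        proof
          assume "p i = p i0"
          then have "i = i0" using i i0(1) using inj_onD[OF inj] by auto
          then show False using False by blast
        qed
        then show ?thesis using False i0(2) by (simp add: comp_def)
      qed
      have P1: "(\<Prod>i\<in>{2..k}. comp (p i) g x) = (\<Prod>i\<in>{2..k}. if i = i0 then g x else 1)"
        by (rule prod.cong[OF refl]) (rule eq)
      have P2: "(\<Prod>i\<in>{2..k}. if i = i0 then g x else 1) = g x"
        using i0(1) prod.delta[of "{2..k}" i0 "\<lambda>_. g x"] by simp
      have c1: "comp (p 1) g x = 1" using F1 by (simp add: comp_def)
      have mem: "fst x \<in> p ` {1..k}" using i0 by (intro image_eqI[of _ p i0]) auto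
      have r: "rest (p ` {1..k}) g x = 1" using mem by (simp add: rest_def)
      show ?thesis by (simp only: c1 r P1 P2) simp
    next
      case False
      have "(\<Prod>i\<in>{2..k}. comp (p i) g x) = 1"
        using False by (intro prod.neutral) (auto simp: comp_def)
      moreover have "fst x \<notin> p ` {1..k}"
      proof
        assume "fst x \<in> p ` {1..k}"
        then obtain i where "i \<in> {1..k}" "fst x = p i" by auto
        then show False using False F1 by (cases "i = 1") auto
      qed
      ultimately show ?thesis using F1 by (simp add: comp_def rest_def)
    qed
  qed
qed

lemma exists_root:
  assumes p: "prime (q::nat)"
  shows "\<exists>z::complex. z \<noteq> 1 \<and> z ^ q = 1"
proof -
  define z where "z = cis (2 * pi / real q)"
  have q2: "q \<ge> 2" using p prime_ge_2_nat by blast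
  have "z ^ q = 1" unfolding z_def DeMoivre using q2 by simp
  moreover have "z \<noteq> 1"
  proof
    assume "z = 1"
    moreover have "Re z = cos (2 * pi / real q)" unfolding z_def by simp
    ultimately have "cos (2 * pi / real q) = 1" by simp
    then obtain n :: int where n: "2 * pi / real q = real_of_int n * 2 * pi" using cos_one_2pi_int by blast
    then have "(2*pi) * (1 / real q) = (2*pi) * real_of_int n" by simp
    then have "1 / real q = real_of_int n" using mult_left_cancel[of "2*pi" "1/real q" "real_of_int n"] by simp
    moreover have "0 < 1 / real q" "1 / real q < 1" using q2 by auto
    ultimately have "0 < real_of_int n" "real_of_int n < 1" by auto
    then have "0 < n" "n < 1" by simp_all
    then show False by simp
  qed
  ultimately show ?thesis by blast
qed



theorem proposition3p5:
  fixes J :: "nat \<Rightarrow> 'j set"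
    and \<Gamma>0 E :: "(nat \<times> 'j \<Rightarrow> complex) set"
    and p n :: "nat \<Rightarrow> nat" and k N :: nat
  assumes "is_subgroup J \<Gamma>0"
    and "k \<ge> 1"
    and "\<forall>i\<in>{1..k}. prime (p i) \<and> n i \<ge> 1"
    and "inj_on p {1..k}"
    and "N = (\<Prod>i=1..k. p i ^ n i)"
    and "PR N \<Gamma>0 E"
  shows "\<exists>Es f \<beta>.
           (\<forall>i\<in>{1..k}. PR (p i ^ n i) (prime_component J (p i)) (Es i)) \<and>
           (\<forall>i\<in>{2..k}. bij_betw (f i) (Es 1) (Es i)) \<and>
           (\<forall>\<gamma>\<in>Es 1. \<beta> \<gamma> \<in> components_outside J (p ` {1..k})) \<and>
           E = (\<lambda>\<gamma>. (\<lambda>x. \<gamma> x * (\<Prod>i\<in>{2..k}. f i \<gamma> x) * \<beta> \<gamma> x)) ` Es 1"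
proof -
  note sg = assms(1)[unfolded is_subgroup_def]
  have G0B: "\<Gamma>0 \<subseteq> big_group J" using sg by blast
  have one0: "gone \<in> \<Gamma>0" using sg unfolding gone_def by blast
  have mul0: "\<forall>g\<in>\<Gamma>0. \<forall>h\<in>\<Gamma>0. gmult g h \<in> \<Gamma>0" using sg by blast
  have EG: "E \<subseteq> \<Gamma>0" using assms(6) unfolding PR_def by blast
  have EB: "E \<subseteq> big_group J" using EG G0B by blast
  have ext: "\<exists>\<chi>\<in>characters (big_group J). \<forall>\<gamma>\<in>E. \<phi> \<gamma> = \<chi> \<gamma>"
    if phi: "\<forall>\<gamma>\<in>E. \<phi> \<gamma> ^ N = 1" for \<phi>
  proof -
    have "\<forall>\<gamma>\<in>E. \<phi> \<gamma> \<in> roots_of_unity N" using phi unfolding roots_of_unity_def by blast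
    then obtain \<chi> where chi: "\<chi> \<in> characters \<Gamma>0" "\<forall>\<gamma>\<in>E. \<phi> \<gamma> = \<chi> \<gamma>"
      using assms(6) unfolding PR_def by blast
    obtain \<chi>' where chi': "\<chi>' \<in> characters (big_group J)" "\<forall>h\<in>\<Gamma>0. \<chi>' h = \<chi> h"
      using char_extend[OF G0B one0 mul0 chi(1)] by blast
    show ?thesis using chi' chi(2) EG by (intro bexI[OF _ chi'(1)]) auto
  qed
  have pdvd: "p i ^ n i dvd N" if "i \<in> {1..k}" for i
    unfolding assms(5) using that by (intro dvd_prodI) auto
  have pdvd1: "p i dvd N" if "i \<in> {1..k}" for i
  proof -
    have "n i \<ge> 1" using assms(3) that by blast
    then have "p i dvd p i ^ n i" by (intro dvd_power) auto
    then show ?thesis using pdvd[OF that] by (rule dvd_trans)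
  qed
  have pr: "prime (p i)" if "i \<in> {1..k}" for i using assms(3) that by blast
  have inj: "inj_on (comp (p i)) E" if i: "i \<in> {1..k}" for i
  proof (rule inj_onI, rule ccontr)
    fix \<gamma> \<gamma>' assume g: "\<gamma> \<in> E" "\<gamma>' \<in> E" "comp (p i) \<gamma> = comp (p i) \<gamma>'" "\<gamma> \<noteq> \<gamma>'"
    obtain \<zeta> :: complex where z: "\<zeta> \<noteq> 1" "\<zeta> ^ p i = 1" using exists_root[OF pr[OF i]] by blast
    have zN: "\<zeta> ^ N = 1" using z(2) pdvd1[OF i] by (auto elim!: dvdE simp: power_mult)
    define \<phi> where "\<phi> x = (if x = \<gamma> then \<zeta> else 1)" for x
    have "\<forall>x\<in>E. \<phi> x ^ N = 1" using zN unfolding \<phi>_def by auto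
    then obtain \<chi> where chi: "\<chi> \<in> characters (big_group J)" "\<forall>x\<in>E. \<phi> x = \<chi> x"
      using ext by blast
    have c1: "\<chi> \<gamma> = \<zeta>" using chi(2) g(1) unfolding \<phi>_def by force
    have c2: "\<chi> \<gamma>' = 1" using chi(2) g(2,4) unfolding \<phi>_def by force
    obtain e M u where d1: "\<chi> \<gamma> = \<chi> (comp (p i) \<gamma>) * u" "u ^ M = 1" "coprime M (p i)"
      "cmod (\<chi> (comp (p i) \<gamma>)) = 1"
      using dec[OF chi(1) _ pr[OF i], of \<gamma>] g(1) EB by blast
    obtain e' M' u' where d2: "\<chi> \<gamma>' = \<chi> (comp (p i) \<gamma>') * u'" "u' ^ M' = 1" "coprime M' (p i)"
      using dec[OF chi(1) _ pr[OF i], of \<gamma>'] g(2) EB by blast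
    define a where "a = \<chi> (comp (p i) \<gamma>)"
    have a0: "a \<noteq> 0" using d1(4) unfolding a_def by auto
    have e1: "\<zeta> = a * u" using c1 d1(1) unfolding a_def by simp
    have e2: "1 = a * u'" using c2 d2(1) g(3) unfolding a_def by simp
    have u'0: "u' \<noteq> 0" using e2 by auto
    have "a = inverse u'" using e2 u'0 by (simp add: field_simps)
    then have "\<zeta> = u * inverse u'" using e1 by simp
    then have "\<zeta> ^ (M * M') = (u ^ M) ^ M' * inverse ((u' ^ M') ^ M)"
      by (simp add: power_mult_distrib power_inverse power_mult[symmetric] mult.commute)
    then have "\<zeta> ^ (M * M') = 1" using d1(2) d2(2) by simp
    moreover have "coprime (M * M') (p i)" using d1(3) d2(3) by simp
    ultimately have "\<zeta> = 1" using root_coprime[of \<zeta> "M*M'" "p i"] z(2) by blast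
    then show False using z(1) by blast
  qed
  have PRi: "PR (p i ^ n i) (prime_component J (p i)) (comp (p i) ` E)" if i: "i \<in> {1..k}" for i
    unfolding PR_def
  proof (intro conjI allI impI)
    show "comp (p i) ` E \<subseteq> prime_component J (p i)" using EB comp_pc by blast
  next
    fix \<psi> assume psi: "\<forall>\<gamma>\<in>comp (p i) ` E. \<psi> \<gamma> \<in> roots_of_unity (p i ^ n i)"
    define \<phi> where "\<phi> x = \<psi> (comp (p i) x)" for x
    have "\<forall>x\<in>E. \<phi> x ^ N = 1"
    proof
      fix x assume "x \<in> E"
      then have "\<phi> x ^ (p i ^ n i) = 1" using psi unfolding \<phi>_def roots_of_unity_def by blast
      then show "\<phi> x ^ N = 1" using pdvd[OF i] by (auto elim!: dvdE simp: power_mult)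
    qed
    then obtain \<chi> where chi: "\<chi> \<in> characters (big_group J)" "\<forall>x\<in>E. \<phi> x = \<chi> x"
      using ext by blast
    have "\<chi> \<in> characters (prime_component J (p i))"
      using chi(1) unfolding characters_def prime_component_def by blast
    moreover have "\<forall>\<gamma>\<in>comp (p i) ` E. \<psi> \<gamma> = \<chi> \<gamma>"
    proof
      fix \<gamma>1 assume "\<gamma>1 \<in> comp (p i) ` E"
      then obtain \<gamma> where g: "\<gamma> \<in> E" "\<gamma>1 = comp (p i) \<gamma>" by blast
      obtain e M u where d: "\<chi> \<gamma> = \<chi> \<gamma>1 * u" "\<chi> \<gamma>1 ^ (p i ^ e) = 1" "u ^ M = 1" "coprime M (p i)"
        "cmod (\<chi> \<gamma>1) = 1"
        using dec[OF chi(1) _ pr[OF i], of \<gamma>] g EB by blast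
      have ps: "\<psi> \<gamma>1 ^ (p i ^ n i) = 1" using psi g unfolding roots_of_unity_def by blast
      have eq: "\<psi> \<gamma>1 = \<chi> \<gamma>1 * u" using chi(2) g d(1) unfolding \<phi>_def by simp
      have a0: "\<chi> \<gamma>1 \<noteq> 0" using d(5) by auto
      have "u = \<psi> \<gamma>1 * inverse (\<chi> \<gamma>1)" using eq a0 by (simp add: field_simps)
      then have "u ^ (p i ^ n i * p i ^ e) = ((\<psi> \<gamma>1 ^ (p i ^ n i)) ^ (p i ^ e)) * inverse ((\<chi> \<gamma>1 ^ (p i ^ e)) ^ (p i ^ n i))"
        by (simp add: power_mult_distrib power_inverse power_mult[symmetric] mult.commute)
      then have "u ^ (p i ^ (n i + e)) = 1" using ps d(2) by (simp add: power_add)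
      moreover have "coprime M (p i ^ (n i + e))" using d(4) by simp
      ultimately have "u = 1" using d(3) root_coprime[of u M "p i ^ (n i + e)"] by blast
      then show "\<psi> \<gamma>1 = \<chi> \<gamma>1" using eq by simp
    qed
    ultimately show "\<exists>\<chi>\<in>characters (prime_component J (p i)). \<forall>\<gamma>\<in>comp (p i) ` E. \<psi> \<gamma> = \<chi> \<gamma>"
      by blast
  qed
  define Es where "Es i = comp (p i) ` E" for i
  define h where "h = inv_into E (comp (p 1))"
  define f where "f i \<gamma>1 = comp (p i) (h \<gamma>1)" for i \<gamma>1
  define \<beta> where "\<beta> \<gamma>1 = rest (p ` {1..k}) (h \<gamma>1)" for \<gamma>1
  have one: "1 \<in> {1..k}" using assms(2) by simp
  have inj1: "inj_on (comp (p 1)) E" using inj[OF one] .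
  have hinv: "h (comp (p 1) \<gamma>) = \<gamma>" if "\<gamma> \<in> E" for \<gamma>
    unfolding h_def using inv_into_f_f[OF inj1 that] .
  have hbij: "bij_betw h (Es 1) E" unfolding h_def Es_def
    using bij_betw_inv_into[OF inj_on_imp_bij_betw[OF inj1]] .
  have hE: "h \<gamma>1 \<in> E" if "\<gamma>1 \<in> Es 1" for \<gamma>1 using hbij that bij_betwE by blast
  have "\<forall>i\<in>{1..k}. PR (p i ^ n i) (prime_component J (p i)) (Es i)"
    using PRi unfolding Es_def by blast
  moreover have "\<forall>i\<in>{2..k}. bij_betw (f i) (Es 1) (Es i)"
  proof
    fix i assume i: "i \<in> {2..k}"
    then have i1: "i \<in> {1..k}" by auto
    have "bij_betw (comp (p i) \<circ> h) (Es 1) (Es i)"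
      using bij_betw_trans[OF hbij inj_on_imp_bij_betw[OF inj[OF i1]]] unfolding Es_def by simp
    then show "bij_betw (f i) (Es 1) (Es i)" unfolding f_def o_def by simp
  qed
  moreover have "\<forall>\<gamma>\<in>Es 1. \<beta> \<gamma> \<in> components_outside J (p ` {1..k})"
    using hE EB rest_co unfolding \<beta>_def by blast
  moreover have "E = (\<lambda>\<gamma>. (\<lambda>x. \<gamma> x * (\<Prod>i\<in>{2..k}. f i \<gamma> x) * \<beta> \<gamma> x)) ` Es 1"
  proof -
    have "(\<lambda>\<gamma>. (\<lambda>x. \<gamma> x * (\<Prod>i\<in>{2..k}. f i \<gamma> x) * \<beta> \<gamma> x)) ` Es 1
        = (\<lambda>\<gamma>. (\<lambda>x. comp (p 1) \<gamma> x * (\<Prod>i\<in>{2..k}. f i (comp (p 1) \<gamma>) x) * \<beta> (comp (p 1) \<gamma>) x)) ` E"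
      unfolding Es_def by (simp add: image_image)
    also have "\<dots> = (\<lambda>\<gamma>. \<gamma>) ` E"
    proof (rule image_cong[OF refl])
      fix \<gamma> assume g: "\<gamma> \<in> E"
      show "(\<lambda>x. comp (p 1) \<gamma> x * (\<Prod>i\<in>{2..k}. f i (comp (p 1) \<gamma>) x) * \<beta> (comp (p 1) \<gamma>) x) = \<gamma>"
      proof
        fix x
        show "comp (p 1) \<gamma> x * (\<Prod>i\<in>{2..k}. f i (comp (p 1) \<gamma>) x) * \<beta> (comp (p 1) \<gamma>) x = \<gamma> x"
          unfolding f_def \<beta>_def hinv[OF g] using recomb[OF assms(4,2)] by blast
      qed
    qed
    finally show ?thesis by simp
  qed
  ultimately show ?thesis by blast
qed

end
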